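(* Let $m\ge 2$. If the Fibonacci sequence is defective mod $m$, then every Gibonacci sequence $\{G_n(a,b)\}$ (with $\gcd(a,b)=1$) is defective mod $m$.
   Context: For integers $a,b$ with $\gcd(a,b)=1$, the Gibonacci sequence $\{G_n(a,b)\}_{n\ge1}$ is defined by $G_1=a$, $G_2=b$, $G_{n+1}=G_{n-1}+G_n$. The Fibonacci sequence is $F_n=G_n(1,1)$. A sequence is complete mod $m$ if every residue class modulo $m$ contains some term of the sequence, and defective mod $m$ otherwise. *)

theory Defs
  imports Main
begin

text \<open>Gibonacci sequence G_n(a,b), n \<ge> 1. We store it with an auxiliary
value at index 0 (G_0 = b - a, consistent with the recurrence); only
indices n \<ge> 1 are used as terms of the sequence.\<close>
fun gib :: "int \<Rightarrow> int \<Rightarrow> nat \<Rightarrow> int" where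
  "gib a b 0 = b - a"
| "gib a b (Suc 0) = a"
| "gib a b (Suc (Suc n)) = gib a b n + gib a b (Suc n)"

definition fibo :: "nat \<Rightarrow> int" where
  "fibo n = gib 1 1 n"

definition complete_mod :: "(nat \<Rightarrow> int) \<Rightarrow> int \<Rightarrow> bool" where
  "complete_mod s m \<longleftrightarrow> (\<forall>r::int. \<exists>n\<ge>1. s n mod m = r mod m)"

definition defective_mod :: "(nat \<Rightarrow> int) \<Rightarrow> int \<Rightarrow> bool" where
  "defective_mod s m \<longleftrightarrow> \<not> complete_mod s m"

end

theory Submission
  imports Defs "HOL-Number_Theory.Cong"
begin

lemma fibo_rec: "fibo (Suc (Suc n)) = fibo n + fibo (Suc n)"
  by (simp add: fibo_def)

lemma fibo_0: "fibo 0 = 0" and fibo_1: "fibo 1 = 1"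
  by (simp_all add: fibo_def)

lemma gib_shift_aux:
  "gib a b (k + n + 1) = gib a b k * fibo n + gib a b (k+1) * fibo (n+1) \<and>
   gib a b (k + Suc n + 1) = gib a b k * fibo (Suc n) + gib a b (k+1) * fibo (Suc n+1)"
proof (induction n)
  case 0
  then show ?case by (simp add: fibo_def)
next
  case (Suc n)
  have "gib a b (k + Suc (Suc n) + 1) = gib a b (k + n + 1) + gib a b (k + Suc n + 1)"
    by (simp add: add.commute)
  also have "\<dots> = gib a b k * fibo (Suc (Suc n)) + gib a b (k+1) * fibo (Suc (Suc n)+1)"
    using Suc.IH by (simp add: fibo_rec algebra_simps)
  finally have "gib a b (k + Suc (Suc n) + 1) = gib a b k * fibo (Suc (Suc n)) + gib a b (k+1) * fibo (Suc (Suc n)+1)" .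
  with Suc.IH show ?case by blast
qed

lemma gib_shift:
  "gib a b (k + n + 1) = gib a b k * fibo n + gib a b (k+1) * fibo (n+1)"
  using gib_shift_aux by blast

lemma gib_gcd: "gcd (gib a b n) (gib a b (Suc n)) = gcd a b"
proof (induction n)
  case 0
  then show ?case
    by (metis gcd.commute gcd_diff1 gib.simps(1) gib.simps(2))
next
  case (Suc n)
  then show ?case
    by (metis add.commute gcd.commute gcd_add2 gib.simps(3))
qed

theorem mainTheorem4:
  fixes m a b :: int
  assumes "m \<ge> 2"
    and "defective_mod fibo m"
    and "gcd a b = 1"
  shows "defective_mod (gib a b) m"
proof -
  have mpos: "m > 0" using assms(1) by simp
  define P where "P n = (gib a b n mod m, gib a b (Suc n) mod m)" for n
  have fwd: "P (Suc n) = P (Suc n') " if "P n = P n'" for n n'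
  proof -
    have "gib a b (Suc (Suc n)) mod m = (gib a b n mod m + gib a b (Suc n) mod m) mod m"
      by (simp add: mod_add_eq)
    also have "\<dots> = (gib a b n' mod m + gib a b (Suc n') mod m) mod m"
      using that by (simp add: P_def)
    also have "\<dots> = gib a b (Suc (Suc n')) mod m"
      by (simp add: mod_add_eq)
    finally show ?thesis using that by (simp add: P_def)
  qed
  have bwd: "P n = P n'" if "P (Suc n) = P (Suc n')" for n n'
  proof -
    have e1: "gib a b n = gib a b (Suc (Suc n)) - gib a b (Suc n)" by simp
    have e2: "gib a b n' = gib a b (Suc (Suc n')) - gib a b (Suc n')" by simp
    have "gib a b n mod m = (gib a b (Suc (Suc n)) mod m - gib a b (Suc n) mod m) mod m"
      by (subst e1) (simp add: mod_diff_eq)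
    also have "\<dots> = (gib a b (Suc (Suc n')) mod m - gib a b (Suc n') mod m) mod m"
      using that by (simp add: P_def)
    also have "\<dots> = gib a b n' mod m"
      by (subst e2) (simp add: mod_diff_eq)
    finally show ?thesis using that by (simp add: P_def)
  qed
  have "range P \<subseteq> {0..<m} \<times> {0..<m}"
    using mpos by (auto simp: P_def)
  hence "finite (range P)" by (rule finite_subset) simp
  hence "\<not> inj P" using finite_imageD infinite_UNIV_nat by blast
  then obtain x y where xy: "x \<noteq> y" "P x = P y" unfolding inj_def by blast
  obtain s p where sp: "p > 0" "P s = P (s + p)"
  proof (cases "x < y")
    case True
    then show ?thesis using that[of "y - x" x] xy by simp
  next
    case False
    then show ?thesis using that[of "x - y" y] xy by simp
  qed
  have up: "P n = P (n + p)" if "n \<ge> s" for n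
    using that
  proof (induction n rule: dec_induct)
    case base then show ?case using sp by simp
  next
    case (step n) then show ?case using fwd[OF step.IH] by simp
  qed
  have down: "P (s - i) = P (s - i + p)" for i
  proof (induction i)
    case 0 then show ?case using sp by simp
  next
    case (Suc i)
    show ?case
    proof (cases "i < s")
      case True
      then have e: "s - i = Suc (s - Suc i)" by simp
      have "P (Suc (s - Suc i)) = P (Suc (s - Suc i + p))" using Suc.IH e by simp
      then show ?thesis by (rule bwd)
    next
      case False
      then show ?thesis using Suc.IH by simp
    qed
  qed
  have per: "P n = P (n + p)" for n
  proof (cases "n \<ge> s")
    case True then show ?thesis by (rule up)
  next
    case False
    then have "s - (s - n) = n" by simp
    then show ?thesis using down[of "s - n"] by metis
  qed
  have perT: "P n = P (n + t * p)" for n t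
  proof (induction t)
    case 0 then show ?case by simp
  next
    case (Suc t)
    have "P (n + t * p) = P (n + t * p + p)" by (rule per)
    moreover have "n + t * p + p = n + Suc t * p" by simp
    ultimately show ?case using Suc.IH by metis
  qed
  show ?thesis
    unfolding defective_mod_def
  proof
    assume comp: "complete_mod (gib a b) m"
    obtain k where k: "k \<ge> 1" "gib a b k mod m = 0"
      using comp[unfolded complete_mod_def, rule_format, of 0] by auto
    define c where "c = gib a b (k+1)"
    have "gcd (gib a b k) c = 1" using gib_gcd[of a b k] assms(3) by (simp add: c_def)
    moreover have "m dvd gib a b k" using k by auto
    ultimately have cop: "coprime c m"
      by (metis coprime_commute coprime_iff_gcd_eq_1 coprime_divisors dvd_refl)
    have "complete_mod fibo m"
      unfolding complete_mod_def
    proof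
      fix r
      obtain j where j: "j \<ge> 1" "gib a b j mod m = (c * r) mod m"
        using comp[unfolded complete_mod_def, rule_format, of "c * r"] by auto
      define j' where "j' = j + (k+1) * p"
      have "P j = P j'" unfolding j'_def by (rule perT)
      hence gj: "gib a b j' mod m = (c * r) mod m" using j by (simp add: P_def)
      have "(k+1) * 1 \<le> (k+1) * p" using sp(1) by (intro mult_le_mono2) simp
      hence "j' \<ge> k + 1" unfolding j'_def by simp
      define n where "n = j' - k"
      have n1: "n \<ge> 1" using \<open>j' \<ge> k + 1\<close> by (simp add: n_def)
      have "j' = k + (n - 1) + 1" using n1 \<open>j' \<ge> k + 1\<close> by (simp add: n_def)
      hence "gib a b j' = gib a b k * fibo (n-1) + c * fibo n"
        using gib_shift[of a b k "n-1"] n1 by (simp add: c_def)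
      hence "gib a b j' mod m = (c * fibo n) mod m"
        using k(2) by (metis add_0 mod_add_left_eq mod_mult_left_eq mult_zero_left mod_0)
      with gj have "[c * fibo n = c * r] (mod m)" by (simp add: cong_def)
      hence "[fibo n = r] (mod m)" using cong_mult_lcancel cop by blast
      thus "\<exists>n\<ge>1. fibo n mod m = r mod m" using n1 by (auto simp: cong_def)
    qed
    thus False using assms(2) by (simp add: defective_mod_def)
  qed
qed

end
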